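(* Let $P$ be a finite poset with a canonical labeling $\omega$ such that $P$ is $\omega$-consistent and saturated. Then there are antichains $A_0,A_1,\dots,A_k$ such that $$(P,\omega)=A_0\oplus_1A_1\oplus_{-1}A_2\oplus_1A_3\oplus_{-1}\cdots\oplus_{\pm1}A_k,$$ i.e. $P$ is the ordinal sum $A_0\oplus A_1\oplus\cdots\oplus A_k$ and, for each covering relation $x\prec y$ with $x\in A_{i}$, $y\in A_{i+1}$, the induced label is $\epsilon(x,y)=1$ if $i$ is even and $\epsilon(x,y)=-1$ if $i$ is odd.
   Context: Write $x\prec y$ if $y$ covers $x$; a labeling $\omega:P\to\{1,\dots,p\}$ induces $\epsilon(x,y)=1$ if $\omega(x)<\omega(y)$ and $-1$ otherwise on covering pairs. $P$ is $\omega$-consistent if for each $z$ the sum $\sum\epsilon(x_{i-1},x_i)$ is the same over all maximal chains $x_0\prec\cdots\prec x_n$ of $\Lambda_z=\{w\le z\}$; that value is the rank $\rho(z)$. $\omega$ is canonical if $P$ is $\omega$-consistent with rank function taking values in $\{0,1\}$ and $\rho(x)<\rho(y)$ implies $\omega(x)<\omega(y)$. $P$ is saturated if any $x,y$ with $|\rho(x)-\rho(y)|=1$ are comparable. The ordinal sum $P\oplus Q$ of posets has underlying set the disjoint union, with $x\le y$ iff $x\le_P y$, or $x\le_Q y$, or $x\in P,y\in Q$; the labeling $\epsilon\oplus_{1}\mu$ (resp. $\epsilon\oplus_{-1}\mu$) of $E(P\oplus Q)$ agrees with $\epsilon$ on $E(P)$, with $\mu$ on $E(Q)$, and equals $1$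 (resp. $-1$) on the remaining covering pairs (from maximal elements of $P$ to minimal elements of $Q$). Ordinal sums are associative. *)

theory Defs
  imports Main
begin

text \<open>A finite poset is modelled as a finite carrier set P inside an ordered type.
  Covering relation x \<prec> y in P.\<close>
definition covers :: "'a::order set \<Rightarrow> 'a \<Rightarrow> 'a \<Rightarrow> bool" where
  "covers P x y \<longleftrightarrow> x \<in> P \<and> y \<in> P \<and> x < y \<and> \<not> (\<exists>z\<in>P. x < z \<and> z < y)"

definition eps :: "('a \<Rightarrow> nat) \<Rightarrow> 'a \<Rightarrow> 'a \<Rightarrow> int" where
  "eps \<omega> x y = (if \<omega> x < \<omega> y then 1 else -1)"

definition down_set :: "'a::order set \<Rightarrow> 'a \<Rightarrow> 'a set" where
  "down_set P z = {w \<in> P. w \<le> z}"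

definition max_chain :: "'a::order set \<Rightarrow> 'a \<Rightarrow> 'a list \<Rightarrow> bool" where
  "max_chain P z xs \<longleftrightarrow> xs \<noteq> [] \<and> set xs \<subseteq> down_set P z
     \<and> (\<forall>i. Suc i < length xs \<longrightarrow> covers P (xs ! i) (xs ! Suc i))
     \<and> \<not> (\<exists>w\<in>down_set P z. w < hd xs) \<and> last xs = z"

definition chain_sum :: "('a \<Rightarrow> nat) \<Rightarrow> 'a list \<Rightarrow> int" where
  "chain_sum \<omega> xs = (\<Sum>i<length xs - 1. eps \<omega> (xs ! i) (xs ! Suc i))"

definition omega_consistent :: "'a::order set \<Rightarrow> ('a \<Rightarrow> nat) \<Rightarrow> bool" where
  "omega_consistent P \<omega> \<longleftrightarrow> (\<forall>z\<in>P. \<forall>xs ys. max_chain P z xs \<and> max_chain P z ys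
       \<longrightarrow> chain_sum \<omega> xs = chain_sum \<omega> ys)"

text \<open>The rank rho(z): the common value of the chain sums.\<close>
definition rank :: "'a::order set \<Rightarrow> ('a \<Rightarrow> nat) \<Rightarrow> 'a \<Rightarrow> int" where
  "rank P \<omega> z = chain_sum \<omega> (SOME xs. max_chain P z xs)"

definition canonical :: "'a::order set \<Rightarrow> ('a \<Rightarrow> nat) \<Rightarrow> bool" where
  "canonical P \<omega> \<longleftrightarrow> omega_consistent P \<omega>
     \<and> (\<forall>x\<in>P. rank P \<omega> x \<in> {0, 1})
     \<and> (\<forall>x\<in>P. \<forall>y\<in>P. rank P \<omega> x < rank P \<omega> y \<longrightarrow> \<omega> x < \<omega> y)"

definition saturated :: "'a::order set \<Rightarrow> ('a \<Rightarrow> nat) \<Rightarrow> bool" where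
  "saturated P \<omega> \<longleftrightarrow> (\<forall>x\<in>P. \<forall>y\<in>P. \<bar>rank P \<omega> x - rank P \<omega> y\<bar> = 1
       \<longrightarrow> x \<le> y \<or> y \<le> x)"

definition is_antichain :: "'a::order set \<Rightarrow> bool" where
  "is_antichain A \<longleftrightarrow> (\<forall>x\<in>A. \<forall>y\<in>A. x \<le> y \<longrightarrow> x = y)"

end

theory Submission
  imports Defs
begin

lemma chain_extend:
  assumes mc: "max_chain P x xs" and cv: "covers P x y"
  shows "max_chain P y (xs @ [y])"
    and "chain_sum \<omega> (xs @ [y]) = chain_sum \<omega> xs + eps \<omega> x y"
proof -
  from mc have ne: "xs \<noteq> []" and sub: "set xs \<subseteq> down_set P x"
    and cov: "\<forall>i. Suc i < length xs \<longrightarrow> covers P (xs ! i) (xs ! Suc i)"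
    and mn: "\<not> (\<exists>w\<in>down_set P x. w < hd xs)" and lst: "last xs = x"
    unfolding max_chain_def by auto
  from cv have xy: "x < y" "x \<in> P" "y \<in> P" unfolding covers_def by auto
  obtain m where m: "length xs = Suc m" using ne by (cases xs) auto
  have lx: "xs ! m = x" using lst ne m by (simp add: last_conv_nth)
  show "max_chain P y (xs @ [y])"
    unfolding max_chain_def
  proof (intro conjI)
    show "set (xs @ [y]) \<subseteq> down_set P y"
      using sub xy unfolding down_set_def by auto
    show "\<forall>i. Suc i < length (xs @ [y]) \<longrightarrow> covers P ((xs @ [y]) ! i) ((xs @ [y]) ! Suc i)"
    proof (intro allI impI)
      fix i assume "Suc i < length (xs @ [y])"
      then have "i < Suc m" using m by simp
      then show "covers P ((xs @ [y]) ! i) ((xs @ [y]) ! Suc i)"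
      proof (cases "i = m")
        case True then show ?thesis using m lx cv by (simp add: nth_append)
      next
        case False then have "Suc i < length xs" using \<open>i < Suc m\<close> m by simp
        then show ?thesis using cov m by (simp add: nth_append)
      qed
    qed
    show "\<not> (\<exists>w\<in>down_set P y. w < hd (xs @ [y]))"
    proof
      assume "\<exists>w\<in>down_set P y. w < hd (xs @ [y])"
      then obtain w where w: "w \<in> P" "w < hd xs" using ne unfolding down_set_def by auto
      have "hd xs \<in> set xs" using ne by simp
      then have "hd xs \<le> x" using sub unfolding down_set_def by auto
      then have "w \<in> down_set P x" using w unfolding down_set_def by auto
      then show False using mn w by auto
    qed
  qed (use ne in auto)
  have "chain_sum \<omega> (xs @ [y]) = (\<Sum>i<Suc m. eps \<omega> ((xs @ [y]) ! i) ((xs @ [y]) ! Suc i))"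
    unfolding chain_sum_def using m by simp
  also have "\<dots> = (\<Sum>i<m. eps \<omega> ((xs @ [y]) ! i) ((xs @ [y]) ! Suc i)) + eps \<omega> x y"
    using m lx by (simp add: nth_append)
  also have "(\<Sum>i<m. eps \<omega> ((xs @ [y]) ! i) ((xs @ [y]) ! Suc i)) = (\<Sum>i<m. eps \<omega> (xs ! i) (xs ! Suc i))"
    by (rule sum.cong) (use m in \<open>auto simp: nth_append\<close>)
  finally show "chain_sum \<omega> (xs @ [y]) = chain_sum \<omega> xs + eps \<omega> x y"
    unfolding chain_sum_def using m by simp
qed

lemma covers_exists:
  assumes "finite P" "z \<in> P" "w0 \<in> P" "w0 < z"
  shows "\<exists>w. covers P w z"
proof -
  have fin: "finite {w\<in>P. w < z}" using assms by auto
  obtain w where w: "w \<in> {w\<in>P. w < z}" "\<forall>b\<in>{w\<in>P. w < z}. w \<le> b \<longrightarrow> w = b"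
    using finite_has_maximal[OF fin] assms by blast
  have "\<not> (\<exists>u\<in>P. w < u \<and> u < z)"
  proof
    assume "\<exists>u\<in>P. w < u \<and> u < z"
    then obtain u where u: "u \<in> P" "w < u" "u < z" by blast
    then have "w = u" using w(2) by auto
    then show False using u by simp
  qed
  then have "covers P w z" unfolding covers_def using assms w(1) by auto
  then show ?thesis by blast
qed

lemma max_chain_exists:
  assumes fin: "finite P"
  shows "z \<in> P \<Longrightarrow> \<exists>xs. max_chain P z xs"
proof (induction n \<equiv> "card {w\<in>P. w < z}" arbitrary: z rule: less_induct)
  case less
  show ?case
  proof (cases "\<exists>w\<in>P. w < z")
    case False
    then have "max_chain P z [z]" using less.prems
      unfolding max_chain_def down_set_def by auto
    then show ?thesis by blast
  next
    case True
    then obtain w0 where "w0 \<in> P" "w0 < z" by blast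
    then obtain w where cw: "covers P w z" using covers_exists[OF fin less.prems] by blast
    then have wP: "w \<in> P" "w < z" unfolding covers_def by auto
    have "{v\<in>P. v < w} \<subset> {v\<in>P. v < z}" using wP by auto
    then have "card {v\<in>P. v < w} < card {v\<in>P. v < z}"
      by (rule psubset_card_mono[rotated]) (use fin in auto)
    then obtain xs where "max_chain P w xs" using less.hyps wP by blast
    then show ?thesis using chain_extend(1)[OF _ cw] by blast
  qed
qed

lemma layers:
  fixes P :: "'a::order set" and r :: "'a \<Rightarrow> int"
  assumes "finite P" "P \<noteq> {}"
    and "\<forall>x\<in>P. r x \<in> {0,1}"
    and "\<forall>x\<in>P. \<forall>y\<in>P. r x \<noteq> r y \<longrightarrow> x \<le> y \<or> y \<le> x"
    and "\<forall>x y. covers P x y \<longrightarrow> r x \<noteq> r y"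
    and "\<forall>x\<in>P. (\<not>(\<exists>w\<in>P. w < x)) \<longrightarrow> r x = c"
    and "c \<in> {0,1}"
  shows "\<exists>(k::nat) (A :: nat \<Rightarrow> 'a set).
        (\<forall>i\<le>k. A i \<noteq> {} \<and> A i \<subseteq> P \<and> is_antichain (A i))
      \<and> P = (\<Union>i\<le>k. A i)
      \<and> (\<forall>i\<le>k. \<forall>j\<le>k. i \<noteq> j \<longrightarrow> A i \<inter> A j = {})
      \<and> (\<forall>i j x y. i < j \<and> j \<le> k \<and> x \<in> A i \<and> y \<in> A j \<longrightarrow> x < y)
      \<and> (\<forall>i\<le>k. \<forall>x\<in>A i. r x = (if even i then c else 1 - c))"
  using assms
proof (induction n \<equiv> "card P" arbitrary: P c rule: less_induct)
  case less
  note fin = less.prems(1) and ne = less.prems(2) and r01 = less.prems(3)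
    and cmp = less.prems(4) and cvr = less.prems(5) and mnr = less.prems(6) and c01 = less.prems(7)
  define M where "M = {x\<in>P. \<not>(\<exists>w\<in>P. w < x)}"
  define P' where "P' = P - M"
  have Mne: "M \<noteq> {}"
  proof -
    obtain m where "m \<in> P" "\<forall>b\<in>P. b \<le> m \<longrightarrow> m = b"
      using finite_has_minimal[OF fin ne] by blast
    then have "m \<in> M" unfolding M_def by (auto simp: less_le)
    then show ?thesis by blast
  qed
  have Mac: "is_antichain M" unfolding is_antichain_def M_def by (auto simp: less_le)
  have MP: "M \<subseteq> P" unfolding M_def by auto
  have Mr: "\<forall>x\<in>M. r x = c" using mnr unfolding M_def by auto
  show ?case
  proof (cases "P' = {}")
    case True
    show ?thesis
      apply (rule exI[of _ 0], rule exI[of _ "\<lambda>_. M"])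
      using True Mne Mac MP Mr unfolding P'_def by auto
  next
    case False
    have cardlt: "card P' < card P" unfolding P'_def
      using Mne MP fin by (intro psubset_card_mono) auto
    have finP': "finite P'" using fin unfolding P'_def by auto
    have covP': "covers P x y" if "covers P' x y" for x y
    proof -
      from that have xy: "x \<in> P'" "y \<in> P'" "x < y" "\<not>(\<exists>z\<in>P'. x < z \<and> z < y)"
        unfolding covers_def by auto
      have "\<not>(\<exists>z\<in>P. x < z \<and> z < y)"
      proof
        assume "\<exists>z\<in>P. x < z \<and> z < y"
        then obtain z where z: "z \<in> P" "x < z" "z < y" by blast
        have "x \<in> P" using xy unfolding P'_def by auto
        then have "z \<notin> M" using z unfolding M_def by auto
        then show False using z xy unfolding P'_def by auto
      qed
      then show ?thesis using xy unfolding covers_def P'_def by auto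
    qed
    have mn': "r x = 1 - c" if "x \<in> P'" "\<not>(\<exists>w\<in>P'. w < x)" for x
    proof -
      have xP: "x \<in> P" and xM: "x \<notin> M" using that unfolding P'_def by auto
      then obtain w0 where "w0 \<in> P" "w0 < x" unfolding M_def by auto
      then obtain w where cw: "covers P w x" using covers_exists[OF fin xP] by blast
      then have "w \<in> P" "w < x" unfolding covers_def by auto
      then have "w \<in> M" using that unfolding P'_def by auto
      then have "r w = c" using Mr by auto
      moreover have "r w \<noteq> r x" using cvr cw by auto
      ultimately show ?thesis using r01 xP c01 by auto
    qed
    have "\<exists>(k::nat) (A :: nat \<Rightarrow> 'a set).
        (\<forall>i\<le>k. A i \<noteq> {} \<and> A i \<subseteq> P' \<and> is_antichain (A i))
      \<and> P' = (\<Union>i\<le>k. A i)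
      \<and> (\<forall>i\<le>k. \<forall>j\<le>k. i \<noteq> j \<longrightarrow> A i \<inter> A j = {})
      \<and> (\<forall>i j x y. i < j \<and> j \<le> k \<and> x \<in> A i \<and> y \<in> A j \<longrightarrow> x < y)
      \<and> (\<forall>i\<le>k. \<forall>x\<in>A i. r x = (if even i then 1 - c else 1 - (1 - c)))"
    proof (rule less.hyps[OF cardlt finP' False])
      show "\<forall>x\<in>P'. r x \<in> {0,1}" using r01 unfolding P'_def by blast
      show "\<forall>x\<in>P'. \<forall>y\<in>P'. r x \<noteq> r y \<longrightarrow> x \<le> y \<or> y \<le> x"
        using cmp unfolding P'_def by blast
      show "\<forall>x y. covers P' x y \<longrightarrow> r x \<noteq> r y" using cvr covP' by blast
      show "\<forall>x\<in>P'. (\<not>(\<exists>w\<in>P'. w < x)) \<longrightarrow> r x = 1 - c" using mn' by blast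
      show "1 - c \<in> {0,1}" using c01 by auto
    qed
    then obtain k :: nat and A :: "nat \<Rightarrow> 'a set" where
      A1: "\<forall>i\<le>k. A i \<noteq> {} \<and> A i \<subseteq> P' \<and> is_antichain (A i)"
      and A2: "P' = (\<Union>i\<le>k. A i)"
      and A3: "\<forall>i\<le>k. \<forall>j\<le>k. i \<noteq> j \<longrightarrow> A i \<inter> A j = {}"
      and A4: "\<forall>i j x y. i < j \<and> j \<le> k \<and> x \<in> A i \<and> y \<in> A j \<longrightarrow> x < y"
      and A5: "\<forall>i\<le>k. \<forall>x\<in>A i. r x = (if even i then 1 - c else 1 - (1 - c))"
      by (elim exE conjE) (rule that; assumption)
    define B where "B = (\<lambda>i. if i = 0 then M else A (i - 1))"
    have below: "x < y" if "x \<in> M" "y \<in> P'" "r x \<noteq> r y" for x y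
    proof -
      have "x \<in> P" "y \<in> P" "x \<noteq> y" using that MP unfolding P'_def by auto
      then have "x \<le> y \<or> y \<le> x" using cmp that by auto
      moreover have "\<not> y < x" using that \<open>y \<in> P\<close> unfolding M_def by auto
      ultimately show ?thesis using \<open>x \<noteq> y\<close> by (auto simp: less_le)
    qed
    have ord: "x < y" if xy0: "x \<in> M" "y \<in> P'" for x y
    proof (cases "r x = r y")
      case False then show ?thesis using below that by auto
    next
      case True
      obtain j where j: "j \<le> k" "y \<in> A j" using xy0(2) A2 by blast
      have rx: "r x = c" using Mr that by auto
      have "j \<noteq> 0"
      proof
        assume "j = 0"
        then have "r y = 1 - c" using A5 j by auto
        then show False using True rx c01 by presburger
      qed
      obtain w where w: "w \<in> A 0" using A1 by blast
      have "w < y" using A4 j w \<open>j \<noteq> 0\<close> by blast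
      moreover have "w \<in> P'" using A1 w by blast
      moreover have "r w = 1 - c" using A5 w by auto
      ultimately have "x < w" using below that rx c01 by auto
      then show ?thesis using \<open>w < y\<close> by auto
    qed
    show ?thesis
    proof (rule exI[of _ "Suc k"], rule exI[of _ B], intro conjI)
      show "\<forall>i\<le>Suc k. B i \<noteq> {} \<and> B i \<subseteq> P \<and> is_antichain (B i)"
      proof (intro allI impI)
        fix i assume i: "i \<le> Suc k"
        show "B i \<noteq> {} \<and> B i \<subseteq> P \<and> is_antichain (B i)"
        proof (cases i)
          case 0 then show ?thesis using Mne MP Mac unfolding B_def by simp
        next
          case (Suc i')
          then have "i' \<le> k" using i by simp
          then have "A i' \<noteq> {} \<and> A i' \<subseteq> P' \<and> is_antichain (A i')" using A1 by blast
          then show ?thesis using Suc unfolding B_def P'_def by auto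
        qed
      qed
      show "P = (\<Union>i\<le>Suc k. B i)"
      proof -
        have "(\<Union>i\<le>Suc k. B i) = B 0 \<union> (\<Union>i\<le>k. B (Suc i))"
        proof (rule set_eqI, rule iffI)
          fix x assume "x \<in> (\<Union>i\<le>Suc k. B i)"
          then obtain i where i: "i \<le> Suc k" "x \<in> B i" by blast
          show "x \<in> B 0 \<union> (\<Union>i\<le>k. B (Suc i))"
          proof (cases i)
            case 0 then show ?thesis using i by simp
          next
            case (Suc i') then show ?thesis using i by auto
          qed
        next
          fix x assume "x \<in> B 0 \<union> (\<Union>i\<le>k. B (Suc i))"
          then show "x \<in> (\<Union>i\<le>Suc k. B i)" by (auto intro: Suc_leI)
        qed
        also have "\<dots> = M \<union> P'" using A2 unfolding B_def by simp
        also have "\<dots> = P" using MP unfolding P'_def by auto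
        finally show ?thesis by simp
      qed
      show "\<forall>i\<le>Suc k. \<forall>j\<le>Suc k. i \<noteq> j \<longrightarrow> B i \<inter> B j = {}"
      proof (intro allI impI)
        fix i j assume h: "i \<le> Suc k" "j \<le> Suc k" "i \<noteq> j"
        have "A l \<subseteq> P'" if "l \<le> k" for l using A1 that by auto
        then show "B i \<inter> B j = {}" using h A3 unfolding B_def P'_def
          by (cases i; cases j) auto
      qed
      show "\<forall>i j x y. i < j \<and> j \<le> Suc k \<and> x \<in> B i \<and> y \<in> B j \<longrightarrow> x < y"
      proof (intro allI impI)
        fix i j x y assume h: "i < j \<and> j \<le> Suc k \<and> x \<in> B i \<and> y \<in> B j"
        then obtain j' where j': "j = Suc j'" by (cases j) auto
        have yA: "y \<in> A j'" "j' \<le> k" using h j' unfolding B_def by auto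
        show "x < y"
        proof (cases i)
          case 0
          then have "x \<in> M" using h unfolding B_def by auto
          moreover have "y \<in> P'" using yA A2 by auto
          ultimately show ?thesis using ord by auto
        next
          case (Suc i')
          then have "x \<in> A i'" "i' < j'" using h j' unfolding B_def by auto
          then show ?thesis using A4 yA by blast
        qed
      qed
      show "\<forall>i\<le>Suc k. \<forall>x\<in>B i. r x = (if even i then c else 1 - c)"
      proof (intro allI impI ballI)
        fix i x assume h: "i \<le> Suc k" "x \<in> B i"
        show "r x = (if even i then c else 1 - c)"
        proof (cases i)
          case 0 then show ?thesis using h Mr unfolding B_def by auto
        next
          case (Suc i')
          then have "x \<in> A i'" "i' \<le> k" using h unfolding B_def by auto
          then show ?thesis using A5 Suc by auto
        qed
      qed
    qed
  qed
qed

theorem proposition3p4: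
  fixes P :: "'a::order set" and \<omega> :: "'a \<Rightarrow> nat"
  assumes "finite P"
    and "bij_betw \<omega> P {1..card P}"
    and "canonical P \<omega>"
    and "omega_consistent P \<omega>"
    and "saturated P \<omega>"
  shows "P = {} \<or>
    (\<exists>(k::nat) (A :: nat \<Rightarrow> 'a set).
        (\<forall>i\<le>k. A i \<noteq> {} \<and> A i \<subseteq> P \<and> is_antichain (A i))
      \<and> P = (\<Union>i\<le>k. A i)
      \<and> (\<forall>i\<le>k. \<forall>j\<le>k. i \<noteq> j \<longrightarrow> A i \<inter> A j = {})
      \<and> (\<forall>i j x y. i < j \<and> j \<le> k \<and> x \<in> A i \<and> y \<in> A j \<longrightarrow> x < y)
      \<and> (\<forall>i x y. Suc i \<le> k \<and> x \<in> A i \<and> y \<in> A (Suc i) \<and> covers P x y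
           \<longrightarrow> eps \<omega> x y = (if even i then 1 else -1)))"
proof (cases "P = {}")
  case True then show ?thesis by simp
next
  case False
  note fin = assms(1)
  let ?r = "rank P \<omega>"
  have r01: "\<forall>x\<in>P. ?r x \<in> {0,1}" using assms(3) unfolding canonical_def by auto
  have rank_eq: "?r z = chain_sum \<omega> xs" if "max_chain P z xs" "z \<in> P" for z xs
  proof -
    have "max_chain P z (SOME xs. max_chain P z xs)" using that by (metis someI)
    then show ?thesis using assms(4) that unfolding omega_consistent_def rank_def by blast
  qed
  have rcov: "?r y = ?r x + eps \<omega> x y" if cv: "covers P x y" for x y
  proof -
    have xP: "x \<in> P" "y \<in> P" using cv unfolding covers_def by auto
    obtain xs where xs: "max_chain P x xs" using max_chain_exists[OF fin xP(1)] by blast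
    show ?thesis using rank_eq[OF xs xP(1)] rank_eq[OF chain_extend(1)[OF xs cv] xP(2)]
      chain_extend(2)[OF xs cv] by simp
  qed
  have cmp: "\<forall>x\<in>P. \<forall>y\<in>P. ?r x \<noteq> ?r y \<longrightarrow> x \<le> y \<or> y \<le> x"
  proof (intro ballI impI)
    fix x y assume "x \<in> P" "y \<in> P" "?r x \<noteq> ?r y"
    moreover have "?r x \<in> {0,1}" "?r y \<in> {0,1}" using r01 \<open>x \<in> P\<close> \<open>y \<in> P\<close> by auto
    ultimately have "\<bar>?r x - ?r y\<bar> = 1" by auto
    then show "x \<le> y \<or> y \<le> x" using assms(5) \<open>x \<in> P\<close> \<open>y \<in> P\<close> unfolding saturated_def by blast
  qed
  have cvr: "\<forall>x y. covers P x y \<longrightarrow> ?r x \<noteq> ?r y"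
    using rcov by (auto simp: eps_def)
  have mnr: "\<forall>x\<in>P. (\<not>(\<exists>w\<in>P. w < x)) \<longrightarrow> ?r x = 0"
  proof (intro ballI impI)
    fix x assume "x \<in> P" "\<not>(\<exists>w\<in>P. w < x)"
    then have "max_chain P x [x]" unfolding max_chain_def down_set_def by auto
    then show "?r x = 0" using rank_eq \<open>x \<in> P\<close> by (simp add: chain_sum_def)
  qed
  obtain k :: nat and A :: "nat \<Rightarrow> 'a set" where
      A1: "\<forall>i\<le>k. A i \<noteq> {} \<and> A i \<subseteq> P \<and> is_antichain (A i)"
      and A2: "P = (\<Union>i\<le>k. A i)"
      and A3: "\<forall>i\<le>k. \<forall>j\<le>k. i \<noteq> j \<longrightarrow> A i \<inter> A j = {}"
      and A4: "\<forall>i j x y. i < j \<and> j \<le> k \<and> x \<in> A i \<and> y \<in> A j \<longrightarrow> x < y"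
      and A5: "\<forall>i\<le>k. \<forall>x\<in>A i. ?r x = (if even i then 0 else 1 - 0)"
    using layers[OF fin False r01 cmp cvr mnr, OF insertI1] by (elim exE conjE) (rule that; assumption)
  have "\<forall>i x y. Suc i \<le> k \<and> x \<in> A i \<and> y \<in> A (Suc i) \<and> covers P x y
           \<longrightarrow> eps \<omega> x y = (if even i then 1 else -1)"
  proof (intro allI impI)
    fix i x y assume h: "Suc i \<le> k \<and> x \<in> A i \<and> y \<in> A (Suc i) \<and> covers P x y"
    then have "?r y = ?r x + eps \<omega> x y" using rcov by blast
    have ik: "i \<le> k" "Suc i \<le> k" using h by auto
    have "?r x = (if even i then 0 else 1 - 0)" using A5 ik(1) h by blast
    moreover have "?r y = (if even (Suc i) then 0 else 1 - 0)" using A5 ik(2) h by blast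
    moreover note \<open>?r y = ?r x + eps \<omega> x y\<close>
    ultimately show "eps \<omega> x y = (if even i then 1 else -1)" by (auto split: if_splits)
  qed
  then have "\<exists>(k::nat) (A :: nat \<Rightarrow> 'a set).
        (\<forall>i\<le>k. A i \<noteq> {} \<and> A i \<subseteq> P \<and> is_antichain (A i))
      \<and> P = (\<Union>i\<le>k. A i)
      \<and> (\<forall>i\<le>k. \<forall>j\<le>k. i \<noteq> j \<longrightarrow> A i \<inter> A j = {})
      \<and> (\<forall>i j x y. i < j \<and> j \<le> k \<and> x \<in> A i \<and> y \<in> A j \<longrightarrow> x < y)
      \<and> (\<forall>i x y. Suc i \<le> k \<and> x \<in> A i \<and> y \<in> A (Suc i) \<and> covers P x y
           \<longrightarrow> eps \<omega> x y = (if even i then 1 else -1))"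
    using A1 A2 A3 A4 by (intro exI[of _ k] exI[of _ A] conjI)
  then show ?thesis by (rule disjI2)
qed

end
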